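(* Let $k\in\omega$. For every partition $\mathbb{C}_k=\bigcup_{i<2^k}X_i$ into $2^k$ pieces there is $i<2^k$ such that $\bigcup X_i=[0,1]^n$.
   Context: Fix a positive integer $n$ and real $0<r<n$. For each $k\in\omega$ fix $M_k\in\omega$ so large that $2^k(\sqrt{n}/M_k)^r<2^{-k}$. $C_k$ is the set of all cubes $[\frac{j_0}{M_k},\frac{j_0+1}{M_k}]\times\cdots\times[\frac{j_{n-1}}{M_k},\frac{j_{n-1}+1}{M_k}]$ with $j_i\in\{0,\dots,M_k-1\}$ for each $i<n$. $\mathbb{C}_k$ is the set of all subsets of $[0,1]^n$ that can be written as the union of $2^k$ (not necessarily distinct) elements of $C_k$. For $X\subset\mathbb{C}_k$, $\bigcup X$ denotes the union of the members of $X$. *)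

theory Defs
  imports "HOL-Analysis.Analysis"
begin

text \<open>The grid cubes C_k of side 1/M in [0,1]^n, where n = CARD('n).\<close>
definition grid_cubes :: "nat \<Rightarrow> (real^('n::finite)) set set" where
  "grid_cubes M = {cbox (\<chi> i. real (j i) / real M) (\<chi> i. (real (j i) + 1) / real M) | j.
                     \<forall>i. j i < M}"

text \<open>The family \<C>_k: unions of 2^k (not necessarily distinct) cubes from C_k.\<close>
definition cube_unions :: "nat \<Rightarrow> nat \<Rightarrow> (real^('n::finite)) set set" where
  "cube_unions k M = {\<Union> (c ` {..<(2::nat)^k}) | c. \<forall>i<(2::nat)^k. c i \<in> grid_cubes M}"

end

theory Submission
  imports Defs
begin

lemma grid_sub:
  assumes "g \<in> grid_cubes M" shows "g \<subseteq> cbox (0::real^'n::finite) 1"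
proof -
  obtain j where g: "g = cbox (\<chi> i. real (j i) / real M) (\<chi> i. (real (j i) + 1) / real M)"
    and j: "\<forall>i. j i < M" using assms unfolding grid_cubes_def by blast
  show ?thesis
  proof
    fix x assume "x \<in> g"
    hence x: "\<And>i. real (j i) / real M \<le> x$i \<and> x$i \<le> (real (j i) + 1) / real M"
      unfolding g mem_box_cart by simp
    have "0 \<le> x$i \<and> x$i \<le> 1" for i
    proof -
      have M: "real M > 0" using j by (metis of_nat_0_less_iff gr_zeroI not_less0)
      have "real (j i) + 1 \<le> real M" using j[rule_format, of i] by linarith
      hence "(real (j i) + 1) / real M \<le> 1" using M by simp
      moreover have "0 \<le> real (j i) / real M" by simp
      ultimately show ?thesis using x[of i] by linarith
    qed
    thus "x \<in> cbox 0 1" unfolding mem_box_cart by simp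
  qed
qed

lemma grid_cover:
  assumes "x \<in> cbox (0::real^'n::finite) 1" and "M > 0"
  shows "\<exists>g\<in>grid_cubes M. x \<in> g"
proof -
  define j where "j i = nat (min (int M - 1) \<lfloor>x$i * real M\<rfloor>)" for i
  have x01: "0 \<le> x$i \<and> x$i \<le> 1" for i using assms(1) unfolding mem_box_cart by simp
  have Mp: "real M > 0" using assms by simp
  have jl: "j i < M" for i unfolding j_def using assms by linarith
  have b: "real (j i) / real M \<le> x$i \<and> x$i \<le> (real (j i) + 1) / real M" for i
  proof -
    have f0: "\<lfloor>x$i * real M\<rfloor> \<ge> 0" using x01[of i] Mp by simp
    show ?thesis
    proof (cases "\<lfloor>x$i * real M\<rfloor> \<le> int M - 1")
      case True
      hence "real (j i) = of_int \<lfloor>x$i * real M\<rfloor>" unfolding j_def using f0 by simp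
      hence "real (j i) \<le> x$i * real M \<and> x$i * real M \<le> real (j i) + 1"
        by (metis floor_le_iff le_floor_iff of_int_floor_le order_refl real_of_int_floor_add_one_ge)
      thus ?thesis using Mp by (simp add: field_simps)
    next
      case False
      hence "real (j i) = real M - 1" unfolding j_def using assms by auto
      moreover have "x$i * real M \<ge> real M - 1"
        using False by linarith
      ultimately show ?thesis using Mp x01[of i] by (simp add: field_simps)
    qed
  qed
  show ?thesis
    apply (rule bexI[of _ "cbox (\<chi> i. real (j i) / real M) (\<chi> i. (real (j i) + 1) / real M)"])
    using b jl unfolding grid_cubes_def mem_box_cart by auto
qed

theorem lemma4p3:
  fixes r :: real and M :: "nat \<Rightarrow> nat" and k :: nat
    and X :: "nat \<Rightarrow> (real^('n::finite)) set set"
  assumes "0 < r" and "r < real CARD('n)"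
    and "\<And>k. M k > 0"
    and "\<And>k. 2^k * (sqrt (real CARD('n)) / real (M k)) powr r < 1 / 2^k"
    and "(\<Union>i<2^k. X i) = cube_unions k (M k)"
    and "\<And>i j. i < 2^k \<Longrightarrow> j < 2^k \<Longrightarrow> i \<noteq> j \<Longrightarrow> X i \<inter> X j = {}"
  shows "\<exists>i<2^k. \<Union> (X i) = cbox (0::real^'n) 1"
proof (rule ccontr)
  assume H: "\<not> ?thesis"
  have sub: "\<Union> (X i) \<subseteq> cbox 0 1" if "i < 2^k" for i
  proof
    fix x assume "x \<in> \<Union> (X i)"
    then obtain u where u: "u \<in> X i" "x \<in> u" by blast
    hence "u \<in> cube_unions k (M k)" using assms(5) that by blast
    then obtain c where uc: "u = \<Union> (c ` {..<(2::nat)^k})" and c: "\<forall>i<(2::nat)^k. c i \<in> grid_cubes (M k)"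
      unfolding cube_unions_def by blast
    then obtain l where "l < 2^k" "x \<in> c l" using u by blast
    thus "x \<in> cbox 0 1" using grid_sub c by blast
  qed
  have "\<forall>i. \<exists>g. i < 2^k \<longrightarrow> g \<in> grid_cubes (M k) \<and> (\<exists>p. p \<in> g \<and> p \<notin> \<Union> (X i))"
  proof
    fix i
    show "\<exists>g. i < 2^k \<longrightarrow> g \<in> grid_cubes (M k) \<and> (\<exists>p. p \<in> g \<and> p \<notin> \<Union> (X i))"
    proof (cases "i < 2^k")
      case True
      then obtain p where p: "p \<in> cbox 0 1" "p \<notin> \<Union> (X i)" using H sub[OF True] by blast
      then obtain g where "g \<in> grid_cubes (M k)" "p \<in> g" using grid_cover assms(3) by blast
      thus ?thesis using p by blast
    qed simp
  qed
  then obtain c where c: "\<And>i. i < 2^k \<Longrightarrow> c i \<in> grid_cubes (M k) \<and> (\<exists>p. p \<in> c i \<and> p \<notin> \<Union> (X i))"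
    by metis
  have "\<Union> (c ` {..<(2::nat)^k}) \<in> cube_unions k (M k)"
    unfolding cube_unions_def using c by blast
  then obtain j where j: "j < 2^k" "\<Union> (c ` {..<(2::nat)^k}) \<in> X j" using assms(5) by blast
  obtain p where "p \<in> c j" "p \<notin> \<Union> (X j)" using c[OF j(1)] by blast
  thus False using j by blast
qed

end
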